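(* Let $f,g\in\mathrm{Diffeo}^-(\mathbb{R})$ with $f(0)=g(0)=0$. Then the following two conditions are equivalent: (1) $f=h^{-1}\circ g\circ h$ for some $h\in\mathrm{Diffeo}^+(\mathbb{R})$. (2) (a) There exists $h_1\in\mathrm{Diffeo}^+(\mathbb{R})$ with $h_1(0)=0$ such that $f\circ f=h_1^{-1}\circ (g\circ g)\circ h_1$; and (b) letting $g_1=h_1^{-1}\circ g\circ h_1$, there exists $h_2\in\mathrm{Diffeo}^+(\mathbb{R})$ with $h_2(0)=0$ and $h_2\circ(f\circ f)=(f\circ f)\circ h_2$, such that $T_0 f=(T_0h_2)^{-1}\circ (T_0 g_1)\circ (T_0 h_2)$ in the group of formal power series under composition.
   Context: $\mathrm{Diffeo}(\mathbb{R})$ is the group of $C^\infty$ diffeomorphisms of $\mathbb{R}$ under composition; $\mathrm{Diffeo}^+(\mathbb{R})$ (resp. $\mathrm{Diffeo}^-(\mathbb{R})$) is the set of orientation-preserving (resp. orientation-reversing) diffeomorphisms. For a diffeomorphism $\phi$ with $\phi(0)=0$, $T_0\phi$ denotes its Taylor series at $0$, $T_0\phi=\phi'(0)X+\frac{\phi''(0)}{2}X^2+\cdots$, regarded as an element of the group $F$ of formally invertible formal power series with real coefficients in the indeterminate $X$ (zero constant term, nonzero coefficient of $X$), with group operation formal composition and $^{-1}$ denoting compositional inverse; $T_0$ is a homomorphism from the group of diffeomorphisms fixing $0$ to $F$. *)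

theory Defs
  imports "HOL-Analysis.Analysis" "HOL-Computational_Algebra.Formal_Power_Series"
begin

definition smooth_real :: "(real \<Rightarrow> real) \<Rightarrow> bool" where
  "smooth_real f \<longleftrightarrow> (\<forall>n. \<forall>x. ((deriv ^^ n) f) differentiable (at x))"

definition diffeo :: "(real \<Rightarrow> real) \<Rightarrow> bool" where
  "diffeo f \<longleftrightarrow> bij f \<and> smooth_real f \<and> smooth_real (inv f)"

definition diffeo_plus :: "(real \<Rightarrow> real) \<Rightarrow> bool" where
  "diffeo_plus f \<longleftrightarrow> diffeo f \<and> (\<forall>x y. x < y \<longrightarrow> f x < f y)"

definition diffeo_minus :: "(real \<Rightarrow> real) \<Rightarrow> bool" where
  "diffeo_minus f \<longleftrightarrow> diffeo f \<and> (\<forall>x y. x < y \<longrightarrow> f y < f x)"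

definition taylor0 :: "(real \<Rightarrow> real) \<Rightarrow> real fps" where
  "taylor0 f = Abs_fps (\<lambda>n. (deriv ^^ n) f 0 / fact n)"

end

theory Submission
  imports Defs
begin

unbundle no vec_syntax
notation fps_nth (infixl "$" 75)


definition Cn :: "nat \<Rightarrow> (real \<Rightarrow> real) \<Rightarrow> bool" where
  "Cn n f \<longleftrightarrow> (\<forall>k<n. \<forall>x. ((deriv ^^ k) f) differentiable (at x))"

lemma Cn_0[simp]: "Cn 0 f" by (simp add: Cn_def)

lemma Cn_Suc: "Cn (Suc n) f \<longleftrightarrow> (\<forall>x. f differentiable (at x)) \<and> Cn n (deriv f)"
  unfolding Cn_def
  by (auto simp: less_Suc_eq_0_disj funpow_Suc_right simp del: funpow.simps)

lemma Cn_mono: "Cn (Suc n) f \<Longrightarrow> Cn n f" by (simp add: Cn_def)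

lemma smooth_Cn: "smooth_real f \<longleftrightarrow> (\<forall>n. Cn n f)"
  unfolding smooth_real_def Cn_def by (meson lessI)

lemma diff_DERIV: "f differentiable (at x) \<Longrightarrow> (f has_real_derivative deriv f x) (at x)"
  using DERIV_deriv_iff_real_differentiable by blast

lemma deriv_add_fun:
  fixes f g :: "real \<Rightarrow> real"
  assumes "\<forall>x. f differentiable (at x)" "\<forall>x. g differentiable (at x)"
  shows "deriv (\<lambda>x. f x + g x) = (\<lambda>x. deriv f x + deriv g x)"
proof (rule ext, rule DERIV_imp_deriv)
  fix x
  have "(f has_real_derivative deriv f x) (at x)" "(g has_real_derivative deriv g x) (at x)"
    using assms by (auto intro: diff_DERIV)
  from DERIV_add[OF this] show "((\<lambda>x. f x + g x) has_real_derivative deriv f x + deriv g x) (at x)" .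
qed

lemma deriv_mult_fun:
  fixes f g :: "real \<Rightarrow> real"
  assumes "\<forall>x. f differentiable (at x)" "\<forall>x. g differentiable (at x)"
  shows "deriv (\<lambda>x. f x * g x) = (\<lambda>x. deriv f x * g x + f x * deriv g x)"
proof (rule ext, rule DERIV_imp_deriv)
  fix x
  have "(f has_real_derivative deriv f x) (at x)" "(g has_real_derivative deriv g x) (at x)"
    using assms by (auto intro: diff_DERIV)
  from DERIV_mult[OF this] show "((\<lambda>x. f x * g x) has_real_derivative deriv f x * g x + f x * deriv g x) (at x)"
    by (simp add: algebra_simps)
qed

lemma deriv_comp_fun:
  fixes f g :: "real \<Rightarrow> real"
  assumes "\<forall>x. f differentiable (at x)" "\<forall>x. g differentiable (at x)"
  shows "deriv (f \<circ> g) = (\<lambda>x. deriv f (g x) * deriv g x)"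
proof (rule ext, rule DERIV_imp_deriv)
  fix x
  have "(f has_real_derivative deriv f (g x)) (at (g x))" "(g has_real_derivative deriv g x) (at x)"
    using assms by (auto intro: diff_DERIV)
  from DERIV_chain[OF this] show "((f \<circ> g) has_real_derivative deriv f (g x) * deriv g x) (at x)" .
qed

lemma diff_add: fixes f g :: "real \<Rightarrow> real" shows "(\<forall>x. f differentiable (at x)) \<Longrightarrow> (\<forall>x. g differentiable (at x)) \<Longrightarrow>
   (\<forall>x. (\<lambda>x. f x + g x) differentiable (at x))" by (simp add: differentiable_add)
lemma diff_mult: fixes f g :: "real \<Rightarrow> real" shows "(\<forall>x. f differentiable (at x)) \<Longrightarrow> (\<forall>x. g differentiable (at x)) \<Longrightarrow>
   (\<forall>x. (\<lambda>x. f x * g x) differentiable (at x))" by (simp add: differentiable_mult)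
lemma diff_comp: fixes f g :: "real \<Rightarrow> real" shows "(\<forall>x. f differentiable (at x)) \<Longrightarrow> (\<forall>x. g differentiable (at x)) \<Longrightarrow>
   (\<forall>x. (f \<circ> g) differentiable (at x))"
  by (metis DERIV_chain diff_DERIV real_differentiable_def)

lemma Cn_add: "Cn n f \<Longrightarrow> Cn n g \<Longrightarrow> Cn n (\<lambda>x. f x + g x)"
proof (induction n arbitrary: f g)
  case (Suc n) then show ?case by (simp add: Cn_Suc deriv_add_fun diff_add)
qed simp

lemma Cn_mult: "Cn n f \<Longrightarrow> Cn n g \<Longrightarrow> Cn n (\<lambda>x. f x * g x)"
proof (induction n arbitrary: f g)
  case (Suc n)
  then show ?case
  proof -
    have d: "\<forall>x. f differentiable (at x)" "\<forall>x. g differentiable (at x)" "Cn n (deriv f)" "Cn n (deriv g)"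
      using Suc.prems unfolding Cn_Suc by auto
    have "Cn n f" "Cn n g" using Suc.prems Cn_mono by auto
    then have "Cn n (\<lambda>x. deriv f x * g x)" "Cn n (\<lambda>x. f x * deriv g x)" using Suc.IH d by auto
    then have "Cn n (\<lambda>x. deriv f x * g x + f x * deriv g x)" by (rule Cn_add)
    then show ?thesis unfolding Cn_Suc using d by (simp add: deriv_mult_fun diff_mult)
  qed
qed simp

lemma Cn_comp: "Cn n f \<Longrightarrow> Cn n g \<Longrightarrow> Cn n (f \<circ> g)"
proof (induction n arbitrary: f g)
  case (Suc n)
  have "Cn n (deriv f \<circ> g)" using Suc by (metis Cn_mono Cn_Suc)
  then have "Cn n (\<lambda>x. deriv f (g x) * deriv g x)" using Suc Cn_mult[of n "deriv f \<circ> g" "deriv g"]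
    by (simp add: Cn_Suc o_def)
  moreover have "\<forall>x. (f \<circ> g) differentiable (at x)" using Suc by (simp add: Cn_Suc diff_comp del: comp_apply)
  moreover have "deriv (f \<circ> g) = (\<lambda>x. deriv f (g x) * deriv g x)" using Suc by (simp add: Cn_Suc deriv_comp_fun del: comp_apply)
  ultimately show ?case unfolding Cn_Suc by simp
qed simp

lemma smooth_comp: "smooth_real f \<Longrightarrow> smooth_real g \<Longrightarrow> smooth_real (f \<circ> g)"
  by (simp add: smooth_Cn Cn_comp)
lemma smooth_add: "smooth_real f \<Longrightarrow> smooth_real g \<Longrightarrow> smooth_real (\<lambda>x. f x + g x)"
  by (simp add: smooth_Cn Cn_add)
lemma smooth_mult: "smooth_real f \<Longrightarrow> smooth_real g \<Longrightarrow> smooth_real (\<lambda>x. f x * g x)"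
  by (simp add: smooth_Cn Cn_mult)
lemma smooth_deriv: "smooth_real f \<Longrightarrow> smooth_real (deriv f)"
  by (simp add: smooth_Cn) (metis Cn_Suc)
lemma smooth_diff: "smooth_real f \<Longrightarrow> f differentiable (at x)"
  by (metis smooth_real_def funpow_0)





lemma deriv_pow_add:
  "smooth_real f \<Longrightarrow> smooth_real g \<Longrightarrow> (deriv ^^ k) (\<lambda>x. f x + g x) = (\<lambda>x. (deriv ^^ k) f x + (deriv ^^ k) g x)"
proof (induction k arbitrary: f g)
  case (Suc k)
  have "deriv (\<lambda>x. f x + g x) = (\<lambda>x. deriv f x + deriv g x)"
    using Suc.prems by (intro deriv_add_fun) (auto intro: smooth_diff)
  then show ?case using Suc.IH[of "deriv f" "deriv g"] Suc.prems
    by (simp add: funpow_Suc_right smooth_deriv del: funpow.simps)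
qed simp

lemma taylor0_nth: "taylor0 f $ n = (deriv ^^ n) f 0 / fact n"
  by (simp add: taylor0_def)

lemma T0_add: "smooth_real f \<Longrightarrow> smooth_real g \<Longrightarrow> taylor0 (\<lambda>x. f x + g x) = taylor0 f + taylor0 g"
  by (rule fps_ext) (simp add: taylor0_nth deriv_pow_add add_divide_distrib)

lemma T0_deriv: "fps_deriv (taylor0 f) = taylor0 (deriv f)"
proof (rule fps_ext)
  fix n
  have "(deriv ^^ Suc n) f 0 = (deriv ^^ n) (deriv f) 0" by (simp add: funpow_Suc_right del: funpow.simps)
  then show "fps_deriv (taylor0 f) $ n = taylor0 (deriv f) $ n"
    by (simp add: taylor0_nth field_simps del: funpow.simps of_nat_Suc)
qed

definition eqn :: "nat \<Rightarrow> real fps \<Rightarrow> real fps \<Rightarrow> bool" where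
  "eqn n A B \<longleftrightarrow> (\<forall>k\<le>n. A $ k = B $ k)"

lemma eqn_refl: "eqn n A A" by (simp add: eqn_def)

lemma eqn_add: "eqn n A B \<Longrightarrow> eqn n C D \<Longrightarrow> eqn n (A + C) (B + D)"
  by (simp add: eqn_def)

lemma eqn_mult: "eqn n A B \<Longrightarrow> eqn n C D \<Longrightarrow> eqn n (A * C) (B * D)"
  unfolding eqn_def fps_mult_nth by (auto intro!: sum.cong)

lemma eqn_Suc: "A $ 0 = B $ 0 \<Longrightarrow> eqn n (fps_deriv A) (fps_deriv B) \<Longrightarrow> eqn (Suc n) A B"
  unfolding eqn_def
proof (intro allI impI)
  fix k assume h: "A $ 0 = B $ 0" "\<forall>k\<le>n. fps_deriv A $ k = fps_deriv B $ k" "k \<le> Suc n"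
  show "A $ k = B $ k"
  proof (cases k)
    case 0 then show ?thesis using h by simp
  next
    case (Suc j)
    then have "fps_deriv A $ j = fps_deriv B $ j" using h by simp
    then show ?thesis using Suc by (simp del: of_nat_Suc)
  qed
qed

lemma eqn_all: "(\<And>n. eqn n A B) \<Longrightarrow> A = B"
  by (rule fps_ext) (auto simp: eqn_def)

lemma T0_mult_eqn:
  "smooth_real f \<Longrightarrow> smooth_real g \<Longrightarrow> eqn n (taylor0 (\<lambda>x. f x * g x)) (taylor0 f * taylor0 g)"
proof (induction n arbitrary: f g)
  case 0 then show ?case by (simp add: eqn_def taylor0_nth)
next
  case (Suc n)
  have sf: "smooth_real (deriv f)" "smooth_real (deriv g)" using Suc.prems by (auto intro: smooth_deriv)
  have d: "deriv (\<lambda>x. f x * g x) = (\<lambda>x. deriv f x * g x + f x * deriv g x)"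
    using Suc.prems by (intro deriv_mult_fun) (auto intro: smooth_diff)
  have "fps_deriv (taylor0 (\<lambda>x. f x * g x)) = taylor0 (\<lambda>x. deriv f x * g x) + taylor0 (\<lambda>x. f x * deriv g x)"
    unfolding T0_deriv d using Suc.prems sf by (intro T0_add smooth_mult)
  moreover have "fps_deriv (taylor0 f * taylor0 g) = taylor0 (deriv f) * taylor0 g + taylor0 f * taylor0 (deriv g)"
    by (simp add: T0_deriv)
  moreover have "eqn n (taylor0 (\<lambda>x. deriv f x * g x) + taylor0 (\<lambda>x. f x * deriv g x))
      (taylor0 (deriv f) * taylor0 g + taylor0 f * taylor0 (deriv g))"
    using Suc sf by (intro eqn_add) auto
  ultimately show ?case by (intro eqn_Suc) (simp_all add: taylor0_nth)
qed

lemma T0_mult: "smooth_real f \<Longrightarrow> smooth_real g \<Longrightarrow> taylor0 (\<lambda>x. f x * g x) = taylor0 f * taylor0 g"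
  by (intro eqn_all T0_mult_eqn)

lemma T0_comp_eqn:
  "smooth_real f \<Longrightarrow> smooth_real g \<Longrightarrow> g 0 = 0 \<Longrightarrow> eqn n (taylor0 (f \<circ> g)) (taylor0 f oo taylor0 g)"
proof (induction n arbitrary: f)
  case 0 then show ?case by (simp add: eqn_def taylor0_nth)
next
  case (Suc n)
  have sf: "smooth_real (deriv f)" "smooth_real (deriv g)" using Suc.prems by (auto intro: smooth_deriv)
  have g0: "taylor0 g $ 0 = 0" using Suc.prems by (simp add: taylor0_nth)
  have d: "deriv (f \<circ> g) = (\<lambda>x. (deriv f \<circ> g) x * deriv g x)"
    using Suc.prems by (simp add: deriv_comp_fun smooth_diff)
  have "fps_deriv (taylor0 (f \<circ> g)) = taylor0 (deriv f \<circ> g) * taylor0 (deriv g)"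
    unfolding T0_deriv d using Suc.prems sf by (intro T0_mult smooth_comp)
  moreover have "fps_deriv (taylor0 f oo taylor0 g) = (taylor0 (deriv f) oo taylor0 g) * taylor0 (deriv g)"
    using g0 by (simp add: fps_compose_deriv T0_deriv)
  moreover have "eqn n (taylor0 (deriv f \<circ> g) * taylor0 (deriv g)) ((taylor0 (deriv f) oo taylor0 g) * taylor0 (deriv g))"
    using Suc.IH[OF sf(1) Suc.prems(2,3)] by (intro eqn_mult eqn_refl)
  ultimately have "eqn n (fps_deriv (taylor0 (f \<circ> g))) (fps_deriv (taylor0 f oo taylor0 g))" by simp
  moreover have "taylor0 (f \<circ> g) $ 0 = (taylor0 f oo taylor0 g) $ 0" using Suc.prems by (simp add: taylor0_nth)
  ultimately show ?case by (intro eqn_Suc)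
qed

lemma T0_comp: "smooth_real f \<Longrightarrow> smooth_real g \<Longrightarrow> g 0 = 0 \<Longrightarrow> taylor0 (f \<circ> g) = taylor0 f oo taylor0 g"
  by (intro eqn_all T0_comp_eqn)




definition glue :: "(real \<Rightarrow> real) \<Rightarrow> (real \<Rightarrow> real) \<Rightarrow> real \<Rightarrow> real" where
  "glue L R = (\<lambda>x. if x \<le> 0 then L x else R x)"

lemma glue_DERIV:
  assumes L: "\<And>x. (L has_real_derivative L' x) (at x)" and R: "\<And>x. (R has_real_derivative R' x) (at x)"
    and e0: "L 0 = R 0" and e1: "L' 0 = R' 0"
  shows "(glue L R has_real_derivative glue L' R' x) (at x)"
proof -
  let ?S = "{..(0::real)}" and ?T = "{(0::real)<..}"
  have cS: "closure ?S = ?S" by simp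
  have cT: "closure ?T = {0..}" by simp
  have U: "?S \<union> ?T = UNIV" by auto
  have "((\<lambda>x. if x \<in> ?S then L x else R x) has_derivative
      (if x \<in> ?S then (*) (L' x) else (*) (R' x))) (at x within (?S \<union> ?T))"
  proof (rule has_derivative_If_within_closures)
    show "(L has_derivative (*) (L' x)) (at x within ?S \<union> (closure ?S \<inter> closure ?T))"
      if "x \<in> ?S \<union> (closure ?S \<inter> closure ?T)"
      using L[of x] by (auto simp: has_field_derivative_def intro: has_derivative_at_withinI)
    show "(R has_derivative (*) (R' x)) (at x within ?T \<union> (closure ?S \<inter> closure ?T))"
      if "x \<in> ?T \<union> (closure ?S \<inter> closure ?T)"
      using R[of x] by (auto simp: has_field_derivative_def intro: has_derivative_at_withinI)
    show "L x = R x" if "x \<in> closure ?S" "x \<in> closure ?T" using that e0 cS cT by auto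
    show "(*) (L' x) = (*) (R' x)" if "x \<in> closure ?S" "x \<in> closure ?T" using that e1 cS cT by auto
    show "x \<in> ?S \<union> ?T" by auto
  qed
  then have "(glue L R has_derivative (*) (glue L' R' x)) (at x)"
    unfolding U by (simp add: glue_def if_distrib cong: if_cong)
  then show ?thesis by (simp add: has_field_derivative_def)
qed

lemma smooth_DERIV: "smooth_real f \<Longrightarrow> (f has_real_derivative deriv f x) (at x)"
  by (intro diff_DERIV smooth_diff)

lemma glue_deriv_pow:
  assumes "smooth_real L" "smooth_real R" "\<forall>n. (deriv ^^ n) L 0 = (deriv ^^ n) R 0"
  shows "(deriv ^^ n) (glue L R) = glue ((deriv ^^ n) L) ((deriv ^^ n) R) \<and> (\<forall>x. (deriv ^^ n) (glue L R) differentiable (at x))"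
  using assms
proof (induction n arbitrary: L R)
  case 0
  have "\<forall>x. glue L R differentiable (at x)"
    using 0 glue_DERIV[of L "deriv L" R "deriv R"] smooth_DERIV
    by (metis funpow_0 funpow_simps_right(2) o_apply real_differentiable_def)
  then show ?case by simp
next
  case (Suc n)
  have d: "deriv (glue L R) = glue (deriv L) (deriv R)"
  proof
    fix x show "deriv (glue L R) x = glue (deriv L) (deriv R) x"
      using Suc.prems glue_DERIV[of L "deriv L" R "deriv R"] smooth_DERIV
      by (intro DERIV_imp_deriv) (metis funpow_0 funpow_simps_right(2) o_apply)
  qed
  have h: "\<forall>k. (deriv ^^ k) (deriv L) 0 = (deriv ^^ k) (deriv R) 0"
    using Suc.prems(3) by (metis funpow_simps_right(2) o_apply)
  have "(deriv ^^ Suc n) (glue L R) = (deriv ^^ n) (glue (deriv L) (deriv R))"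
    by (simp add: funpow_Suc_right d del: funpow.simps)
  moreover note Suc.IH[OF smooth_deriv[OF Suc.prems(1)] smooth_deriv[OF Suc.prems(2)] h, THEN conjunct1]
  moreover note Suc.IH[OF smooth_deriv[OF Suc.prems(1)] smooth_deriv[OF Suc.prems(2)] h, THEN conjunct2]
  moreover have "(deriv ^^ Suc n) L = (deriv ^^ n) (deriv L)" "(deriv ^^ Suc n) R = (deriv ^^ n) (deriv R)"
    by (simp_all add: funpow_Suc_right del: funpow.simps)
  ultimately show ?case by (metis (no_types))
qed

lemma glue_smooth:
  assumes "smooth_real L" "smooth_real R" "taylor0 L = taylor0 R"
  shows "smooth_real (glue L R)"
proof -
  have "\<forall>n. (deriv ^^ n) L 0 = (deriv ^^ n) R 0"
  proof
    fix n have "taylor0 L $ n = taylor0 R $ n" using assms by simp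
    then show "(deriv ^^ n) L 0 = (deriv ^^ n) R 0" by (simp add: taylor0_nth)
  qed
  then show ?thesis using glue_deriv_pow[OF assms(1,2)] unfolding smooth_real_def by blast
qed





definition inc :: "(real \<Rightarrow> real) \<Rightarrow> bool" where "inc h \<longleftrightarrow> (\<forall>x y. x < y \<longrightarrow> h x < h y)"
definition dec :: "(real \<Rightarrow> real) \<Rightarrow> bool" where "dec h \<longleftrightarrow> (\<forall>x y. x < y \<longrightarrow> h y < h x)"

lemma inc_sign:
  assumes "inc h" "h 0 = 0"
  shows "h x \<le> 0 \<longleftrightarrow> x \<le> 0" "0 \<le> h x \<longleftrightarrow> 0 \<le> x" "h x < 0 \<longleftrightarrow> x < 0" "0 < h x \<longleftrightarrow> 0 < x"
  using assms unfolding inc_def by (metis linorder_not_le order_le_less)+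

lemma dec_sign:
  assumes "dec h" "h 0 = 0"
  shows "h x \<le> 0 \<longleftrightarrow> 0 \<le> x" "0 \<le> h x \<longleftrightarrow> x \<le> 0" "h x < 0 \<longleftrightarrow> 0 < x" "0 < h x \<longleftrightarrow> x < 0"
  using assms unfolding dec_def by (metis linorder_not_le order_le_less)+

lemma inc_inv: assumes "bij h" "inc h" shows "inc (inv h)"
  unfolding inc_def
proof (intro allI impI)
  fix x y :: real assume "x < y"
  have a: "h (inv h x) = x" "h (inv h y) = y" using assms(1) by (auto simp: bij_def surj_f_inv_f)
  show "inv h x < inv h y"
  proof (rule ccontr)
    assume "\<not> inv h x < inv h y"
    then have "inv h y < inv h x \<or> inv h y = inv h x" by auto
    then show False using assms(2) a \<open>x < y\<close> unfolding inc_def by (metis less_asym less_irrefl)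
  qed
qed

lemma dec_inv: assumes "bij h" "dec h" shows "dec (inv h)"
  unfolding dec_def
proof (intro allI impI)
  fix x y :: real assume "x < y"
  have a: "h (inv h x) = x" "h (inv h y) = y" using assms(1) by (auto simp: bij_def surj_f_inv_f)
  show "inv h y < inv h x"
  proof (rule ccontr)
    assume "\<not> inv h y < inv h x"
    then have "inv h x < inv h y \<or> inv h y = inv h x" by auto
    then show False using assms(2) a \<open>x < y\<close> unfolding dec_def by (metis less_asym less_irrefl)
  qed
qed

lemma inv0: "bij h \<Longrightarrow> h 0 = 0 \<Longrightarrow> inv h 0 = (0::real)"
  by (metis bij_is_inj inv_f_f)

lemma bij_ff: "bij h \<Longrightarrow> h (inv h y) = y" by (simp add: bij_def surj_f_inv_f)
lemma bij_ff2: "bij h \<Longrightarrow> inv h (h y) = y" by (simp add: bij_def inv_f_f)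

lemma diffeo_deriv_nz:
  assumes "diffeo h" shows "deriv h x \<noteq> 0"
proof -
  have s: "smooth_real h" "smooth_real (inv h)" "bij h" using assms by (auto simp: diffeo_def)
  have "((inv h \<circ> h) has_real_derivative deriv (inv h) (h x) * deriv h x) (at x)"
    using s by (intro DERIV_chain smooth_DERIV)
  moreover have "inv h \<circ> h = (\<lambda>x. x)" using s(3) by (auto simp: bij_ff2)
  ultimately have "((\<lambda>x. x) has_real_derivative deriv (inv h) (h x) * deriv h x) (at x)" by simp
  then have "deriv (inv h) (h x) * deriv h x = 1" using DERIV_ident DERIV_unique by blast
  then show ?thesis by auto
qed

lemma fps_cancel:
  fixes A B C :: "real fps"
  assumes "A oo B = C oo B" "B $ 0 = 0" "B $ 1 \<noteq> 0"
  shows "A = C"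
proof -
  have i0: "fps_inv B $ 0 = 0" by (simp add: fps_inv_def)
  have "A = A oo (B oo fps_inv B)" using fps_inv_right[OF assms(2,3)] by simp
  also have "\<dots> = (A oo B) oo fps_inv B" using i0 assms by (simp add: fps_compose_assoc)
  also have "\<dots> = (C oo B) oo fps_inv B" using assms by simp
  also have "\<dots> = C oo (B oo fps_inv B)" using i0 assms by (simp add: fps_compose_assoc)
  also have "\<dots> = C" using fps_inv_right[OF assms(2,3)] by simp
  finally show ?thesis .
qed

lemma T0_0: "taylor0 h $ 0 = h 0" by (simp add: taylor0_nth)
lemma T0_1: "taylor0 h $ 1 = deriv h 0" by (simp add: taylor0_nth)

lemma deriv_id_pow: "(deriv ^^ Suc (Suc n)) (\<lambda>x::real. x) = (\<lambda>_. 0)"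
proof (induction n)
  case 0
  have "deriv (\<lambda>x::real. x) = (\<lambda>_. 1)" by (rule ext, rule DERIV_imp_deriv, rule DERIV_ident)
  moreover have "deriv (\<lambda>_::real. 1::real) = (\<lambda>_. 0)" by (rule ext, rule DERIV_imp_deriv, rule DERIV_const)
  ultimately show ?case by simp
next
  case (Suc n)
  have "deriv (\<lambda>_::real. 0::real) = (\<lambda>_. 0)" by (rule ext, rule DERIV_imp_deriv, rule DERIV_const)
  then show ?case using Suc by (simp del: funpow.simps) (simp)
qed

lemma deriv_id1: "deriv (\<lambda>x::real. x) = (\<lambda>_. 1)" by (rule ext, rule DERIV_imp_deriv, rule DERIV_ident)

lemma smooth_id: "smooth_real (\<lambda>x::real. x)"
  unfolding smooth_real_def
proof (intro allI)
  fix n x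
  show "(deriv ^^ n) (\<lambda>x::real. x) differentiable at x"
  proof (cases n)
    case 0 then show ?thesis by simp
  next
    case (Suc m) then show ?thesis
      by (cases m) (simp add: deriv_id1, simp add: deriv_id_pow del: funpow.simps)
  qed
qed

lemma T0_id: "taylor0 (\<lambda>x::real. x) = fps_X"
proof (rule fps_ext)
  fix n show "taylor0 (\<lambda>x::real. x) $ n = fps_X $ n"
  proof (cases n)
    case 0 then show ?thesis by (simp add: taylor0_nth)
  next
    case (Suc m) then show ?thesis
      by (cases m) (simp add: taylor0_nth deriv_id1, simp add: taylor0_nth deriv_id_pow del: funpow.simps)
  qed
qed





lemma diffeo_plus_D: "diffeo_plus h \<Longrightarrow> bij h \<and> smooth_real h \<and> smooth_real (inv h) \<and> inc h"
  by (auto simp: diffeo_plus_def diffeo_def inc_def)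
lemma diffeo_minus_D: "diffeo_minus h \<Longrightarrow> bij h \<and> smooth_real h \<and> smooth_real (inv h) \<and> dec h"
  by (auto simp: diffeo_minus_def diffeo_def dec_def)

lemma inc_comp: "inc a \<Longrightarrow> inc b \<Longrightarrow> inc (a \<circ> b)" by (simp add: inc_def)

lemma main_rev:
  fixes f g h1 h2 :: "real \<Rightarrow> real"
  assumes f: "diffeo_minus f" and g: "diffeo_minus g" and f0: "f 0 = 0" and g0: "g 0 = 0"
    and h1: "diffeo_plus h1" and h10: "h1 0 = 0" and ff: "f \<circ> f = inv h1 \<circ> (g \<circ> g) \<circ> h1"
    and h2: "diffeo_plus h2" and h20: "h2 0 = 0" and comm: "h2 \<circ> (f \<circ> f) = (f \<circ> f) \<circ> h2"
    and tay: "taylor0 f = fps_inv (taylor0 h2) oo (taylor0 (inv h1 \<circ> g \<circ> h1) oo taylor0 h2)"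
  shows "\<exists>h. diffeo_plus h \<and> f = inv h \<circ> g \<circ> h"
proof -
  note fD = diffeo_minus_D[OF f] and gD = diffeo_minus_D[OF g]
  note h1D = diffeo_plus_D[OF h1] and h2D = diffeo_plus_D[OF h2]
  have bijs: "bij f" "bij g" "bij h1" "bij h2" using fD gD h1D h2D by auto
  have sm: "smooth_real f" "smooth_real g" "smooth_real h1" "smooth_real h2"
     "smooth_real (inv f)" "smooth_real (inv g)" "smooth_real (inv h1)" "smooth_real (inv h2)"
    using fD gD h1D h2D by auto
  have mono: "dec f" "dec g" "inc h1" "inc h2" "dec (inv f)" "dec (inv g)" "inc (inv h1)" "inc (inv h2)"
    using fD gD h1D h2D by (auto intro: inc_inv dec_inv)
  have z: "inv f 0 = 0" "inv g 0 = 0" "inv h1 0 = 0" "inv h2 0 = 0"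
    using bijs f0 g0 h10 h20 by (auto intro: inv0)
  note zs = z f0 g0 h10 h20
  note signs = inc_sign[OF mono(3) h10] inc_sign[OF mono(4) h20] inc_sign[OF mono(7) z(3)] inc_sign[OF mono(8) z(4)]
     dec_sign[OF mono(1) f0] dec_sign[OF mono(2) g0] dec_sign[OF mono(5) z(1)] dec_sign[OF mono(6) z(2)]
  have invs: "\<And>y. f (inv f y) = y" "\<And>y. inv f (f y) = y" "\<And>y. g (inv g y) = y" "\<And>y. inv g (g y) = y"
    "\<And>y. h1 (inv h1 y) = y" "\<And>y. inv h1 (h1 y) = y" "\<And>y. h2 (inv h2 y) = y" "\<And>y. inv h2 (h2 y) = y"
    using bijs by (auto simp: bij_ff bij_ff2)
  define g1 where "g1 = inv h1 \<circ> g \<circ> h1"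
  have g10: "g1 0 = 0" by (simp add: g1_def zs)
  have smg1: "smooth_real g1" unfolding g1_def using sm by (intro smooth_comp)
  have gg: "\<And>x. g1 (g1 x) = f (f x)"
  proof -
    fix x have "f (f x) = inv h1 (g (g (h1 x)))" using fun_cong[OF ff, of x] by simp
    then show "g1 (g1 x) = f (f x)" by (simp add: g1_def invs)
  qed
  have cm: "\<And>x. h2 (f (f x)) = f (f (h2 x))" using fun_cong[OF comm] by simp
  define L where "L = g1 \<circ> h2 \<circ> inv f"
  have smL: "smooth_real L" unfolding L_def using sm smg1 by (intro smooth_comp)
  have L0: "L 0 = 0" by (simp add: L_def zs g10)
  have Lf: "L \<circ> f = g1 \<circ> h2" by (rule ext) (simp add: L_def invs)
  have d0: "deriv f 0 \<noteq> 0" "deriv h2 0 \<noteq> 0"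
    using f h2 diffeo_deriv_nz by (auto simp: diffeo_minus_def diffeo_plus_def)
  have B0: "taylor0 h2 $ 0 = 0" "taylor0 h2 $ 1 \<noteq> 0" "taylor0 f $ 0 = 0" "taylor0 f $ 1 \<noteq> 0"
    using d0 zs by (auto simp: taylor0_nth)
  have Q0: "(taylor0 g1 oo taylor0 h2) $ 0 = 0" by (simp add: T0_0 g10)
  have i0: "fps_inv (taylor0 h2) $ 0 = 0" by (simp add: fps_inv_def)
  have "taylor0 h2 oo taylor0 f = taylor0 h2 oo (fps_inv (taylor0 h2) oo (taylor0 g1 oo taylor0 h2))"
    using tay by (simp add: g1_def)
  also have "\<dots> = (taylor0 h2 oo fps_inv (taylor0 h2)) oo (taylor0 g1 oo taylor0 h2)"
    using Q0 i0 by (simp add: fps_compose_assoc)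
  also have "\<dots> = taylor0 g1 oo taylor0 h2" using fps_inv_right[OF B0(1,2)] Q0 by simp
  finally have t1: "taylor0 h2 oo taylor0 f = taylor0 g1 oo taylor0 h2" .
  have "taylor0 L oo taylor0 f = taylor0 (L \<circ> f)" by (rule T0_comp[OF smL sm(1) f0, symmetric])
  also have "\<dots> = taylor0 g1 oo taylor0 h2" unfolding Lf by (rule T0_comp[OF smg1 sm(4) h20])
  also have "\<dots> = taylor0 h2 oo taylor0 f" using t1 by (rule sym)
  finally have TL: "taylor0 L = taylor0 h2" using B0(3,4) by (rule fps_cancel)
  define H where "H = glue L h2"
  have smH: "smooth_real H" unfolding H_def using smL sm TL by (intro glue_smooth)
  define PL where "PL = f \<circ> inv h2 \<circ> inv h1 \<circ> inv g \<circ> h1"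
  have smPL: "smooth_real PL" unfolding PL_def using sm by (intro smooth_comp)
  have PL0: "PL 0 = 0" by (simp add: PL_def zs)
  have PLL: "PL \<circ> L = (\<lambda>x. x)" by (rule ext) (simp add: PL_def L_def g1_def invs)
  have PRR: "inv h2 \<circ> h2 = (\<lambda>x. x)" by (rule ext) (simp add: invs)
  have "taylor0 PL oo taylor0 L = taylor0 (PL \<circ> L)" by (rule T0_comp[OF smPL smL L0, symmetric])
  also have "\<dots> = taylor0 (inv h2 \<circ> h2)" unfolding PLL PRR ..
  also have "\<dots> = taylor0 (inv h2) oo taylor0 h2" by (rule T0_comp[OF sm(8) sm(4) h20])
  also have "\<dots> = taylor0 (inv h2) oo taylor0 L" unfolding TL ..
  finally have eqP: "taylor0 PL oo taylor0 L = taylor0 (inv h2) oo taylor0 L" .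
  have "taylor0 L $ 0 = 0" "taylor0 L $ 1 \<noteq> 0" using TL B0(1,2) by auto
  with eqP have TP: "taylor0 PL = taylor0 (inv h2)" by (rule fps_cancel)
  define P where "P = glue PL (inv h2)"
  have smP: "smooth_real P" unfolding P_def using smPL sm TP by (intro glue_smooth)
  have HP: "\<And>y. H (P y) = y"
  proof -
    fix y show "H (P y) = y"
      by (cases "y \<le> 0") (simp_all add: H_def P_def glue_def PL_def L_def g1_def invs signs)
  qed
  have PH: "\<And>x. P (H x) = x"
  proof -
    fix x show "P (H x) = x"
      by (cases "x \<le> 0") (simp_all add: H_def P_def glue_def PL_def L_def g1_def invs signs)
  qed
  have Hf: "\<And>x. H (f x) = g1 (H x)"
  proof -
    fix x :: real
    consider "x < 0" | "x = 0" | "x > 0" using linorder_cases[of x 0] by blast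
    then show "H (f x) = g1 (H x)"
    proof cases
      case 1
      then have "H (f x) = h2 (f x)" by (simp add: H_def glue_def signs)
      also have "\<dots> = h2 (f (f (inv f x)))" by (simp add: invs)
      also have "\<dots> = f (f (h2 (inv f x)))" by (simp add: cm)
      also have "\<dots> = g1 (g1 (h2 (inv f x)))" by (simp add: gg)
      also have "\<dots> = g1 (H x)" using 1 by (simp add: H_def glue_def L_def)
      finally show ?thesis .
    next
      case 2 then show ?thesis by (simp add: H_def glue_def L_def zs g10)
    next
      case 3 then show ?thesis by (simp add: H_def glue_def L_def signs invs)
    qed
  qed
  have incH: "inc H" unfolding inc_def
  proof (intro allI impI)
    fix x y :: real assume xy: "x < y"
    have incL: "L x < L y" if "x < y" for x y
    proof -
      have "inv f y < inv f x" using mono(5) that by (simp add: dec_def)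
      then have "h2 (inv f y) < h2 (inv f x)" using mono(4) by (simp add: inc_def)
      then have "g (h1 (h2 (inv f x))) < g (h1 (h2 (inv f y)))" using mono(2,3) by (simp add: inc_def dec_def)
      then show ?thesis using mono(7) by (simp add: inc_def L_def g1_def)
    qed
    show "H x < H y"
    proof (cases "y \<le> 0")
      case True then show ?thesis using xy incL by (simp add: H_def glue_def)
    next
      case False
      show ?thesis
      proof (cases "x \<le> 0")
        case True
        then have "L x \<le> 0" by (simp add: L_def g1_def signs)
        moreover have "0 < h2 y" using False by (simp add: signs)
        ultimately show ?thesis using True False by (simp add: H_def glue_def)
      next
        case False2: False
        then show ?thesis using False xy mono(4) by (simp add: H_def glue_def inc_def)
      qed
    qed
  qed
  define h where "h = h1 \<circ> H"
  define k where "k = P \<circ> inv h1"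
  have hk: "h \<circ> k = id" "k \<circ> h = id" by (auto simp: h_def k_def HP PH invs)
  have invh: "inv h = k" using hk by (rule inv_unique_comp)
  have "diffeo_plus h"
    unfolding diffeo_plus_def diffeo_def
  proof (intro conjI)
    show "bij h" using hk by (intro o_bij)
    show "smooth_real h" unfolding h_def using sm smH by (intro smooth_comp)
    show "smooth_real (inv h)" unfolding invh k_def using sm smP by (intro smooth_comp)
    show "\<forall>x y. x < y \<longrightarrow> h x < h y" using inc_comp[OF mono(3) incH] by (simp add: inc_def h_def)
  qed
  moreover have "f = inv h \<circ> g \<circ> h"
  proof
    fix x :: real
    have "(inv h \<circ> g \<circ> h) x = P (g1 (H x))" unfolding invh by (simp add: k_def h_def g1_def)
    also have "\<dots> = f x" by (simp add: Hf[symmetric] PH)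
    finally show "f x = (inv h \<circ> g \<circ> h) x" by simp
  qed
  ultimately show ?thesis by blast
qed





lemma fps_inv_X: "fps_inv (fps_X :: real fps) = fps_X"
proof -
  have "fps_X oo fps_inv (fps_X :: real fps) = fps_X" by (rule fps_inv_right) simp_all
  moreover have "fps_inv (fps_X :: real fps) $ 0 = 0" by (simp add: fps_inv_def)
  ultimately show ?thesis by simp
qed

theorem theorem2p2:
  fixes f g :: "real \<Rightarrow> real"
  assumes "diffeo_minus f" and "diffeo_minus g" and "f 0 = 0" and "g 0 = 0"
  shows "(\<exists>h. diffeo_plus h \<and> f = inv h \<circ> g \<circ> h) \<longleftrightarrow>
    (\<exists>h1. diffeo_plus h1 \<and> h1 0 = 0 \<and> f \<circ> f = inv h1 \<circ> (g \<circ> g) \<circ> h1 \<and>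
       (let g1 = inv h1 \<circ> g \<circ> h1 in
        \<exists>h2. diffeo_plus h2 \<and> h2 0 = 0 \<and> h2 \<circ> (f \<circ> f) = (f \<circ> f) \<circ> h2 \<and>
             taylor0 f = fps_inv (taylor0 h2) oo (taylor0 g1 oo taylor0 h2)))"
proof
  assume "\<exists>h. diffeo_plus h \<and> f = inv h \<circ> g \<circ> h"
  then obtain h where h: "diffeo_plus h" and fh: "f = inv h \<circ> g \<circ> h" by blast
  have hb: "bij h" using h by (simp add: diffeo_plus_def diffeo_def)
  have gd: "dec g" using assms(2) by (simp add: diffeo_minus_def dec_def)
  have "inv h (g (h 0)) = 0" using fun_cong[OF fh, of 0] assms(3) by simp
  then have "g (h 0) = h 0" using hb by (metis bij_ff)
  then have h0: "h 0 = 0" using dec_sign(3,4)[OF gd assms(4), of "h 0"] by linarith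
  have ff: "f \<circ> f = inv h \<circ> (g \<circ> g) \<circ> h"
  proof
    fix x
    have "f (f x) = inv h (g (h (inv h (g (h x)))))" by (simp add: fh)
    also have "\<dots> = inv h (g (g (h x)))" by (simp only: bij_ff[OF hb])
    finally show "(f \<circ> f) x = (inv h \<circ> (g \<circ> g) \<circ> h) x" by simp
  qed
  have idp: "diffeo_plus id"
    unfolding diffeo_plus_def diffeo_def using smooth_id by (simp add: id_def [symmetric] inv_id)
  have "taylor0 f = fps_inv (taylor0 id) oo (taylor0 f oo taylor0 id)"
    using assms(3) by (simp add: id_def T0_id fps_inv_X T0_0)
  then have "let g1 = inv h \<circ> g \<circ> h in
        \<exists>h2. diffeo_plus h2 \<and> h2 0 = 0 \<and> h2 \<circ> (f \<circ> f) = (f \<circ> f) \<circ> h2 \<and>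
             taylor0 f = fps_inv (taylor0 h2) oo (taylor0 g1 oo taylor0 h2)"
    unfolding Let_def fh[symmetric] using idp by (intro exI[of _ id]) simp
  then show "\<exists>h1. diffeo_plus h1 \<and> h1 0 = 0 \<and> f \<circ> f = inv h1 \<circ> (g \<circ> g) \<circ> h1 \<and>
       (let g1 = inv h1 \<circ> g \<circ> h1 in
        \<exists>h2. diffeo_plus h2 \<and> h2 0 = 0 \<and> h2 \<circ> (f \<circ> f) = (f \<circ> f) \<circ> h2 \<and>
             taylor0 f = fps_inv (taylor0 h2) oo (taylor0 g1 oo taylor0 h2))"
    using h h0 ff by blast
next
  assume "\<exists>h1. diffeo_plus h1 \<and> h1 0 = 0 \<and> f \<circ> f = inv h1 \<circ> (g \<circ> g) \<circ> h1 \<and>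
       (let g1 = inv h1 \<circ> g \<circ> h1 in
        \<exists>h2. diffeo_plus h2 \<and> h2 0 = 0 \<and> h2 \<circ> (f \<circ> f) = (f \<circ> f) \<circ> h2 \<and>
             taylor0 f = fps_inv (taylor0 h2) oo (taylor0 g1 oo taylor0 h2))"
  then obtain h1 h2 where "diffeo_plus h1" "h1 0 = 0" "f \<circ> f = inv h1 \<circ> (g \<circ> g) \<circ> h1"
    "diffeo_plus h2" "h2 0 = 0" "h2 \<circ> (f \<circ> f) = (f \<circ> f) \<circ> h2"
    "taylor0 f = fps_inv (taylor0 h2) oo (taylor0 (inv h1 \<circ> g \<circ> h1) oo taylor0 h2)"
    unfolding Let_def by blast
  then show "\<exists>h. diffeo_plus h \<and> f = inv h \<circ> g \<circ> h" using assms by (intro main_rev)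
qed


end
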